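(* Let $\gamma_{sd},\gamma_{sr},\gamma_{rd}>0$ be the effective power gains of the source–destination, source–relay and relay–destination links, and let $P>0$ be a total power (spectral density). Define the direct-transmission (DT) rate $R^{DT}(P)=\log(1+\gamma_{sd}P)$ and the regenerative decode-and-forward (DF) rate \[ R^{DF}(P)=\max_{\substack{P_s,P_r\ge 0\\ \frac12 P_s+\frac12 P_r=P}}\ \min\Big\{\tfrac12\log\big(1+\gamma_{sr}P_s\big),\ \tfrac12\log\big(1+\gamma_{sd}P_s+\gamma_{rd}P_r\big)\Big\}. \] If $\gamma_{sr}<\gamma_{sd}$ or $\gamma_{rd}<\gamma_{sd}$, then $R^{DT}(P)>R^{DF}(P)$, i.e. the DT link supports a higher rate than the DF link with the same total power (the DF link is not useful).
   Context: Half-duplex regenerative (repetition-coding) decode-and-forward relaying: in the first half of the time the source transmits with power $P_s$ and the relay must decode; in the second half the relay transmits with power $P_r$, and the destination combines (maximal-ratio combining) both received signals. Powers are spectral densities and the factors $\tfrac12$ account for each node transmitting half the time; $\log$ denotes the logarithm (any fixed base). *)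

theory Defs
  imports "HOL-Analysis.Analysis"
begin

text \<open>Logarithm of a fixed base b > 1 (the paper allows any fixed base).\<close>

definition R_DT :: "real \<Rightarrow> real \<Rightarrow> real \<Rightarrow> real" where
  "R_DT b g_sd P = log b (1 + g_sd * P)"

definition DF_alloc :: "real \<Rightarrow> (real \<times> real) set" where
  "DF_alloc P = {(Ps, Pr). Ps \<ge> 0 \<and> Pr \<ge> 0 \<and> Ps / 2 + Pr / 2 = P}"

definition DF_obj :: "real \<Rightarrow> real \<Rightarrow> real \<Rightarrow> real \<Rightarrow> real \<times> real \<Rightarrow> real" where
  "DF_obj b g_sd g_sr g_rd = (\<lambda>(Ps, Pr).
     min ((1/2) * log b (1 + g_sr * Ps)) ((1/2) * log b (1 + g_sd * Ps + g_rd * Pr)))"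

text \<open>The maximum over the compact feasible set, written as a supremum.\<close>
definition R_DF :: "real \<Rightarrow> real \<Rightarrow> real \<Rightarrow> real \<Rightarrow> real \<Rightarrow> real" where
  "R_DF b g_sd g_sr g_rd P = (SUP a\<in>DF_alloc P. DF_obj b g_sd g_sr g_rd a)"

end

theory Submission
  imports Defs
begin

theorem proposition1:
  fixes b g_sd g_sr g_rd P :: real
  assumes "b > 1"
    and "g_sd > 0" and "g_sr > 0" and "g_rd > 0" and "P > 0"
    and "g_sr < g_sd \<or> g_rd < g_sd"
  shows "R_DT b g_sd P > R_DF b g_sd g_sr g_rd P"
proof -
  define C where "C = (1/2) * log b (1 + 2 * g_sd * P)"
  have obj: "DF_obj b g_sd g_sr g_rd a \<le> C" if "a \<in> DF_alloc P" for a
  proof -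
    obtain Ps Pr where a0: "a = (Ps, Pr)" by (cases a)
    with that have a: "a = (Ps, Pr)" "Ps \<ge> 0" "Pr \<ge> 0" "Ps/2 + Pr/2 = P"
      unfolding DF_alloc_def by auto
    show ?thesis
      using assms(6)
    proof
      assume h: "g_sr < g_sd"
      have "g_sr * Ps \<le> g_sd * Ps" using h a by (simp add: mult_right_mono)
      also have "g_sd * Ps \<le> 2 * g_sd * P" using a assms by (simp add: mult_left_mono)
      finally have "log b (1 + g_sr * Ps) \<le> log b (1 + 2 * g_sd * P)"
        using assms a by (subst log_le_cancel_iff) (auto intro!: add_pos_nonneg)
      then show ?thesis unfolding DF_obj_def C_def a by simp
    next
      assume h: "g_rd < g_sd"
      have "g_rd * Pr \<le> g_sd * Pr" using h a by (simp add: mult_right_mono)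
      hence "g_sd * Ps + g_rd * Pr \<le> 2 * g_sd * P" using a assms
      proof -
        have "g_sd * Ps + g_sd * Pr = 2 * g_sd * P" proof -
          have "Ps + Pr = 2 * P" using a(4) by simp
          hence "g_sd * (Ps + Pr) = g_sd * (2 * P)" by simp
          thus ?thesis by (simp add: distrib_left mult.commute mult.left_commute)
        qed
        thus ?thesis using \<open>g_rd * Pr \<le> g_sd * Pr\<close> by linarith
      qed
      hence "log b (1 + g_sd * Ps + g_rd * Pr) \<le> log b (1 + 2 * g_sd * P)"
        using assms a by (subst log_le_cancel_iff) (auto intro!: add_pos_nonneg add_nonneg_nonneg)
      then show ?thesis unfolding DF_obj_def C_def a by simp
    qed
  qed
  have ne: "(2*P, 0) \<in> DF_alloc P" using assms unfolding DF_alloc_def by auto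
  have le: "R_DF b g_sd g_sr g_rd P \<le> C"
    unfolding R_DF_def by (rule cSUP_least) (use ne obj in auto)
  have x: "g_sd * P > 0" using assms by simp
  have "1 + 2 * g_sd * P < (1 + g_sd * P)^2" proof -
    have "0 < (g_sd * P) * (g_sd * P)" using mult_pos_pos[OF x x] .
    moreover have "(1 + g_sd * P)^2 = 1 + 2 * g_sd * P + (g_sd * P) * (g_sd * P)"
      by (simp add: power2_eq_square algebra_simps)
    ultimately show ?thesis by linarith
  qed
  hence "log b (1 + 2 * g_sd * P) < log b ((1 + g_sd * P)^2)"
  proof -
    have p: "0 < 1 + 2 * g_sd * P" "0 < (1 + g_sd * P)^2" using x by auto
    show ?thesis using assms(1) p \<open>1 + 2 * g_sd * P < (1 + g_sd * P)^2\<close>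
      by (subst log_less_cancel_iff) auto
  qed
  also have "\<dots> = 2 * log b (1 + g_sd * P)"
  proof -
    have "0 < 1 + g_sd * P" using x by linarith
    thus ?thesis by (subst log_nat_power) auto
  qed
  finally have "C < R_DT b g_sd P" unfolding C_def R_DT_def by linarith
  with le show ?thesis by simp
qed

end
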